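(* For every $0<\delta\le1$ and $0<\epsilon\le1$ there exist $n$, $m$, a preference profile $\sigma$, and two distributions $\mathcal{D}_1,\mathcal{D}_2$ supported on $[0,1]$ with total variation distance at most $\epsilon$ such that every alternative $j$ maximizing $\mathbb{E}_{\mathcal{D}_1}[\mathrm{sw}(j,u)]$ at $\sigma$ satisfies $\mathbb{E}_{\mathcal{D}_2}[\mathrm{sw}(j,u)]<\delta\max_{k\in A}\mathbb{E}_{\mathcal{D}_2}[\mathrm{sw}(k,u)]$; i.e., the expected-welfare-maximizing rule for $\mathcal{D}_1$ is not a $\delta$-expected-welfare-maximizing rule for $\mathcal{D}_2$.
   Context: There are $n$ voters and $m$ alternatives $A=\{1,\dots,m\}$. A preference profile $\sigma$ consists of a ranking of $A$ for each voter. Given a distribution $\mathcal{D}$ and profile $\sigma$, a random utility profile $u$ consistent with $\sigma$ is generated as follows: independently for each voter $i$, draw $m$ i.i.d. samples from $\mathcal{D}$ and assign them, from highest to lowest, to the alternatives in the order of voter $i$'s ranking. The social welfare of $j$ is $\mathrm{sw}(j,u)=\sum_i u_{ij}$; $\mathbb{E}_{\mathcal{D}}$ is expectation over $u$ generated with $\mathcal{D}$. *)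

theory Defs
  imports "HOL-Probability.Probability"
begin

text \<open>Alternatives are 0,...,m-1 (the paper's 1..m, shifted); voters are 0,...,n-1.
  A ranking is a list of all alternatives without repetition, best first.\<close>

definition is_profile :: "nat \<Rightarrow> nat \<Rightarrow> (nat \<Rightarrow> nat list) \<Rightarrow> bool" where
  "is_profile n m \<sigma> \<longleftrightarrow> (\<forall>i<n. distinct (\<sigma> i) \<and> set (\<sigma> i) = {..<m})"

definition distr_on01 :: "real measure \<Rightarrow> bool" where
  "distr_on01 D \<longleftrightarrow> prob_space D \<and> sets D = sets borel \<and> measure D {0..1} = 1"

definition tv_dist :: "real measure \<Rightarrow> real measure \<Rightarrow> real" where
  "tv_dist D1 D2 = (SUP A \<in> sets borel. \<bar>measure D1 A - measure D2 A\<bar>)"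

definition kth_largest :: "nat \<Rightarrow> (nat \<Rightarrow> real) \<Rightarrow> nat \<Rightarrow> real" where
  "kth_largest m x k = rev (sort (map x [0..<m])) ! k"

definition rank_pos :: "(nat \<Rightarrow> nat list) \<Rightarrow> nat \<Rightarrow> nat \<Rightarrow> nat" where
  "rank_pos \<sigma> i j = (THE k. k < length (\<sigma> i) \<and> \<sigma> i ! k = j)"

text \<open>Utility profile from samples \<omega> i (voter i's m samples): the samples are assigned
  from highest to lowest to alternatives in the order of voter i's ranking.\<close>
definition utility :: "nat \<Rightarrow> (nat \<Rightarrow> nat list) \<Rightarrow> (nat \<Rightarrow> nat \<Rightarrow> real) \<Rightarrow> nat \<Rightarrow> nat \<Rightarrow> real" where
  "utility m \<sigma> \<omega> i j = kth_largest m (\<omega> i) (rank_pos \<sigma> i j)"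

definition sw :: "nat \<Rightarrow> nat \<Rightarrow> (nat \<Rightarrow> nat list) \<Rightarrow> (nat \<Rightarrow> nat \<Rightarrow> real) \<Rightarrow> nat \<Rightarrow> real" where
  "sw n m \<sigma> \<omega> j = (\<Sum>i<n. utility m \<sigma> \<omega> i j)"

definition sample_measure :: "real measure \<Rightarrow> nat \<Rightarrow> nat \<Rightarrow> (nat \<Rightarrow> nat \<Rightarrow> real) measure" where
  "sample_measure D n m = PiM {..<n} (\<lambda>_. PiM {..<m} (\<lambda>_. D))"

definition exp_sw :: "real measure \<Rightarrow> nat \<Rightarrow> nat \<Rightarrow> (nat \<Rightarrow> nat list) \<Rightarrow> nat \<Rightarrow> real" where
  "exp_sw D n m \<sigma> j = (\<integral>\<omega>. sw n m \<sigma> \<omega> j \<partial>sample_measure D n m)"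

end

theory Submission
  imports Defs
begin


definition Dm :: "real \<Rightarrow> real \<Rightarrow> real \<Rightarrow> real measure" where
  "Dm a b q = distr (measure_pmf (pmf_of_list [(a,1-q),(b,q)])) borel id"

lemma wf_ab: "0 \<le> (q::real) \<Longrightarrow> q \<le> 1 \<Longrightarrow> pmf_of_list_wf [(a,1-q),(b,q)]"
  by (auto simp: pmf_of_list_wf_def algebra_simps)

lemma sets_Dm[simp, measurable_cong]: "sets (Dm a b q) = sets borel"
  by (simp add: Dm_def)

lemma space_Dm[simp]: "space (Dm a b q) = UNIV"
  by (simp add: Dm_def)

lemma prob_Dm: "prob_space (Dm a b q)"
  unfolding Dm_def by (intro prob_space.prob_space_distr) (auto simp: prob_space_measure_pmf)

lemma measure_Dm:
  assumes "0 \<le> q" "q \<le> 1" "A \<in> sets borel"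
  shows "measure (Dm a b q) A = (if a \<in> A then 1-q else 0) + (if b \<in> A then q else 0)"
  using assms unfolding Dm_def
  by (subst measure_distr) (auto simp: measure_pmf_of_list[OF wf_ab])

definition tup :: "real \<Rightarrow> real \<Rightarrow> real \<Rightarrow> nat \<Rightarrow> real" where
  "tup u v w = (\<lambda>i. if i = 0 then u else if i = 1 then v else if i = 2 then w else undefined)"
lemma tup_in: "u \<in> V \<Longrightarrow> v \<in> V \<Longrightarrow> w \<in> V \<Longrightarrow> tup u v w \<in> PiE {..<3} (\<lambda>_. V)"
proof (rule PiE_I)
  fix i :: nat assume "i \<in> {..<3}" "u \<in> V" "v \<in> V" "w \<in> V"
  then have "i = 0 \<or> i = 1 \<or> i = 2" by auto
  then show "tup u v w i \<in> V" using \<open>u \<in> V\<close> \<open>v \<in> V\<close> \<open>w \<in> V\<close> by (auto simp: tup_def)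
next
  fix i :: nat assume "i \<notin> {..<3}"
  then show "tup u v w i = undefined" by (simp add: tup_def)
qed

lemma lt3: "(i::nat) < 3 \<Longrightarrow> i = 0 \<or> i = 1 \<or> i = 2" by presburger

lemma tup_eq: assumes f: "f \<in> PiE {..<3} (\<lambda>_. V)" shows "f = tup (f 0) (f 1) (f 2)"
proof (rule ext)
  fix i 
  show "f i = tup (f 0) (f 1) (f 2) i"
  proof (cases "i < 3")
    case True
    then have "i = 0 \<or> i = 1 \<or> i = 2" by (rule lt3)
    then show ?thesis unfolding tup_def by (elim disjE) simp_all
  next
    case False
    then have "f i = undefined" using f by (meson PiE_arb lessThan_iff)
    then show ?thesis using False by (simp add: tup_def)
  qed
qed
lemma PiE3: "PiE {..<3} (\<lambda>_. V) = (\<lambda>(u,v,w). tup u v w) ` (V \<times> V \<times> V)"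
proof
  show "PiE {..<3} (\<lambda>_. V) \<subseteq> (\<lambda>(u,v,w). tup u v w) ` (V \<times> V \<times> V)"
  proof
    fix f :: "nat \<Rightarrow> real" assume f: "f \<in> PiE {..<3} (\<lambda>_. V)"
    have "f 0 \<in> V" "f 1 \<in> V" "f 2 \<in> V" using PiE_mem[OF f] by simp_all
    then have "(f 0, f 1, f 2) \<in> V \<times> V \<times> V" by simp
    moreover have "f = (\<lambda>(u,v,w). tup u v w) (f 0, f 1, f 2)" using tup_eq[OF f] by simp
    ultimately show "f \<in> (\<lambda>(u,v,w). tup u v w) ` (V \<times> V \<times> V)" by (rule rev_image_eqI)
  qed
  show "(\<lambda>(u,v,w). tup u v w) ` (V \<times> V \<times> V) \<subseteq> PiE {..<3} (\<lambda>_. V)"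
  proof
    fix f assume "f \<in> (\<lambda>(u,v,w). tup u v w) ` (V \<times> V \<times> V)"
    then obtain x where x: "x \<in> V \<times> V \<times> V" "f = (\<lambda>(u,v,w). tup u v w) x" by (rule imageE)
    obtain u v w where "x = (u,v,w)" by (cases x) auto
    with x have "u \<in> V" "v \<in> V" "w \<in> V" "f = tup u v w" by auto
    then show "f \<in> PiE {..<3} (\<lambda>_. V)" using tup_in by simp
  qed
qed

lemma inj_tup: "inj_on (\<lambda>(u,v,w). tup u v w) X"
proof (rule inj_onI)
  fix x y assume "x \<in> X" "y \<in> X" and eq: "(\<lambda>(u,v,w). tup u v w) x = (\<lambda>(u,v,w). tup u v w) y"
  obtain u v w where x: "x = (u,v,w)" by (cases x) auto
  obtain u' v' w' where y: "y = (u',v',w')" by (cases y) auto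
  from eq have "tup u v w = tup u' v' w'" by (simp add: x y)
  then have "tup u v w 0 = tup u' v' w' 0" "tup u v w 1 = tup u' v' w' 1" "tup u v w 2 = tup u' v' w' 2"
    by auto
  then show "x = y" by (simp add: tup_def x y)
qed
lemma integral_finite_supp:
  assumes "prob_space M" "finite S" "\<And>s. s \<in> S \<Longrightarrow> {s} \<in> sets M" "measure M S = 1"
    "g \<in> borel_measurable M"
  shows "integrable M g \<and> integral\<^sup>L M g = (\<Sum>s\<in>S. g s * measure M {s})"
proof -
  interpret prob_space M by fact
  have SM: "S \<in> sets M"
  proof -
    have "S = (\<Union>s\<in>S. {s})" by auto
    also have "\<dots> \<in> sets M" using assms(2,3) by (intro sets.finite_UN) auto
    finally show ?thesis .
  qed
  have AE: "AE x in M. x \<in> S" using AE_in_set_eq_1[OF SM] assms(4) by simp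
  define h where "h x = (\<Sum>s\<in>S. g s * indicator {s} x)" for x
  have hx: "h x = g x" if "x \<in> S" for x
  proof -
    have "h x = (\<Sum>s\<in>S. if s = x then g x else 0)"
      unfolding h_def by (intro sum.cong refl) (simp add: indicator_def)
    also have "\<dots> = g x" using that assms(2) by (simp add: sum.delta')
    finally show ?thesis .
  qed
  have hg: "AE x in M. g x = h x"
    using AE by eventually_elim (simp add: hx)
  have ints: "integrable M (\<lambda>x. g s * indicator {s} x)" if "s \<in> S" for s
  proof -
    have "integrable M (indicator {s} :: _ \<Rightarrow> real)"
      using assms(3)[OF that] by (intro integrable_real_indicator) (auto simp: emeasure_eq_measure)
    then show ?thesis by (rule integrable_mult_right)
  qed
  have hint: "integrable M h" unfolding h_def by (rule Bochner_Integration.integrable_sum) (rule ints)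
  have hm: "h \<in> borel_measurable M" using hint by (rule borel_measurable_integrable)
  have "integrable M g" using integrable_cong_AE[OF assms(5) hm hg] hint by simp
  moreover have "integral\<^sup>L M g = integral\<^sup>L M h" using integral_cong_AE[OF assms(5) hm hg] .
  moreover have "integral\<^sup>L M h = (\<Sum>s\<in>S. integral\<^sup>L M (\<lambda>x. g s * indicator {s} x))"
    unfolding h_def by (rule Bochner_Integration.integral_sum) (rule ints)
  moreover have each: "integral\<^sup>L M (\<lambda>x. g s * indicator {s} x) = g s * measure M {s}" if "s \<in> S" for s
  proof -
    have "{s} \<inter> space M = {s}" using sets.sets_into_space[OF assms(3)[OF that]] by blast
    then show ?thesis by simp
  qed
  then have "(\<Sum>s\<in>S. integral\<^sup>L M (\<lambda>x. g s * indicator {s} x)) = (\<Sum>s\<in>S. g s * measure M {s})"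
    by (intro sum.cong refl)
  ultimately show ?thesis by simp
qed



lemma tup_ext: "tup u v w \<in> extensional {..<3}"
  using tup_in[of u UNIV v w] by (simp add: PiE_iff)

lemma E3:
  fixes h :: "real \<Rightarrow> real \<Rightarrow> real \<Rightarrow> real"
  assumes q: "0 \<le> q" "q \<le> 1" and ab: "a \<noteq> b"
    and hm: "(\<lambda>x. h (x 0) (x 1) (x 2)) \<in> borel_measurable (PiM {..<3::nat} (\<lambda>_. Dm a b q))"
  shows "integrable (PiM {..<3::nat} (\<lambda>_. Dm a b q)) (\<lambda>x. h (x 0) (x 1) (x 2)) \<and>
    integral\<^sup>L (PiM {..<3::nat} (\<lambda>_. Dm a b q)) (\<lambda>x. h (x 0) (x 1) (x 2)) =
    (\<Sum>u\<in>{a,b}. \<Sum>v\<in>{a,b}. \<Sum>w\<in>{a,b}. h u v w *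
       ((if u = a then 1-q else q) * (if v = a then 1-q else q) * (if w = a then 1-q else q)))"
proof -
  define D where "D = Dm a b q"
  define M where "M = PiM {..<3::nat} (\<lambda>_. D)"
  define V where "V = {a,b}"
  define S where "S = PiE {..<3::nat} (\<lambda>_. V)"
  define wt where "wt t = (if t = a then 1-q else q)" for t
  interpret P: finite_product_prob_space "\<lambda>_. D" "{..<3::nat}"
    unfolding D_def
    by (intro finite_product_prob_space.intro finite_product_sigma_finite.intro product_prob_space.intro
        product_sigma_finite.intro product_prob_space_axioms.intro finite_product_sigma_finite_axioms.intro
        prob_space_imp_sigma_finite prob_Dm) auto
  have pM: "prob_space M" unfolding M_def by (rule P.prob_space_axioms)
  have mD: "measure D {t} = wt t" if "t \<in> V" for t
    using that q ab unfolding D_def V_def wt_def by (subst measure_Dm) auto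
  have single: "measure M {tup u v w} = wt u * wt v * wt w" if "u \<in> V" "v \<in> V" "w \<in> V" for u v w
  proof -
    have "{tup u v w} = PiE {..<3} (\<lambda>i. {tup u v w i})"
      by (rule PiE_singleton[symmetric]) (rule tup_ext)
    then have "measure M {tup u v w} = (\<Prod>i\<in>{..<3}. measure D {tup u v w i})"
      unfolding M_def by (simp only:) (rule P.finite_measure_PiM_emb, simp add: D_def)
    also have "\<dots> = measure D {u} * measure D {v} * measure D {w}"
      by (simp add: numeral_3_eq_3 lessThan_Suc tup_def)
    finally show ?thesis using that mD by simp
  qed
  have fin: "finite S" unfolding S_def V_def by (intro finite_PiE) auto
  have sets1: "{s} \<in> sets M" if "s \<in> S" for s
  proof -
    have "s \<in> extensional {..<3}" using that unfolding S_def by (simp add: PiE_iff)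
    then have "{s} = PiE {..<3} (\<lambda>i. {s i})" by (rule PiE_singleton[symmetric])
    also have "\<dots> \<in> sets M" unfolding M_def D_def by (intro sets_PiM_I_finite) auto
    finally show ?thesis .
  qed
  have mS: "measure M S = 1"
  proof -
    have "measure M S = (\<Prod>i\<in>{..<3::nat}. measure D V)"
      unfolding M_def S_def by (rule P.finite_measure_PiM_emb) (simp add: D_def V_def)
    also have "measure D V = 1" using q ab unfolding D_def V_def by (subst measure_Dm) auto
    finally show ?thesis by simp
  qed
  have main: "integrable M (\<lambda>x. h (x 0) (x 1) (x 2)) \<and>
      integral\<^sup>L M (\<lambda>x. h (x 0) (x 1) (x 2)) = (\<Sum>s\<in>S. h (s 0) (s 1) (s 2) * measure M {s})"
    by (rule integral_finite_supp[OF pM fin sets1 mS]) (use hm in \<open>unfold M_def D_def\<close>)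
  have "(\<Sum>s\<in>S. h (s 0) (s 1) (s 2) * measure M {s})
      = (\<Sum>x\<in>V \<times> V \<times> V. (\<lambda>s. h (s 0) (s 1) (s 2) * measure M {s}) ((\<lambda>(u,v,w). tup u v w) x))"
    unfolding S_def PiE3
    using sum.reindex[OF inj_tup, of "\<lambda>s. h (s 0) (s 1) (s 2) * measure M {s}" "V \<times> V \<times> V"]
    by (simp add: comp_def)
  also have "\<dots> = (\<Sum>x\<in>V \<times> V \<times> V. (\<lambda>(u,v,w). h u v w * (wt u * wt v * wt w)) x)"
    by (intro sum.cong refl) (auto simp: single, auto simp: tup_def)
  also have "\<dots> = (\<Sum>u\<in>V. \<Sum>v\<in>V. \<Sum>w\<in>V. h u v w * (wt u * wt v * wt w))"
    by (simp add: sum.cartesian_product)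
  finally show ?thesis using main unfolding M_def D_def V_def wt_def by simp
qed



lemma s3: "rev (sort [a,b,c::real]) ! 0 = max a (max b c) \<and> rev (sort [a,b,c::real]) ! 2 = min a (min b c)
  \<and> rev (sort [a,b,c::real]) ! 1 = max (min a b) (min (max a b) c)"
  by (cases "a \<le> b"; cases "b \<le> c"; cases "a \<le> c"; simp add: max_def min_def)

lemma upt3: "[0..<3] = [0,1,2::nat]" by (simp add: numeral_3_eq_3)

lemma kth_eq: "kth_largest 3 x k = rev (sort [x 0, x 1, x 2]) ! k"
  unfolding kth_largest_def upt3 by simp

lemma kth0: "kth_largest 3 x 0 = max (x 0) (max (x 1) (x 2))"
  unfolding kth_eq using s3 by blast
lemma kth1: "kth_largest 3 x 1 = max (min (x 0) (x 1)) (min (max (x 0) (x 1)) (x 2))"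
  unfolding kth_eq using s3 by blast
lemma kth2: "kth_largest 3 x 2 = min (x 0) (min (x 1) (x 2))"
  unfolding kth_eq using s3 by blast

lemma kth_meas:
  assumes "k < 3"
  shows "(\<lambda>x. kth_largest 3 x k) \<in> borel_measurable (PiM {..<3::nat} (\<lambda>_. Dm a b q))"
proof -
  have c: "(\<lambda>x. x i) \<in> borel_measurable (PiM {..<3::nat} (\<lambda>_. Dm a b q))" if "i < 3" for i
  proof -
    have "(\<lambda>x. x i) \<in> measurable (PiM {..<3::nat} (\<lambda>_. Dm a b q)) (Dm a b q)"
      using that by (intro measurable_component_singleton) simp
    moreover have "measurable (PiM {..<3::nat} (\<lambda>_. Dm a b q)) (Dm a b q) = borel_measurable (PiM {..<3::nat} (\<lambda>_. Dm a b q))"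
      by (rule measurable_cong_sets) simp_all
    ultimately show ?thesis by simp
  qed
  have c0: "(\<lambda>x. x 0) \<in> borel_measurable (PiM {..<3::nat} (\<lambda>_. Dm a b q))" by (rule c) simp
  have c1: "(\<lambda>x. x 1) \<in> borel_measurable (PiM {..<3::nat} (\<lambda>_. Dm a b q))" by (rule c) simp
  have c2: "(\<lambda>x. x 2) \<in> borel_measurable (PiM {..<3::nat} (\<lambda>_. Dm a b q))" by (rule c) simp
  have "k = 0 \<or> k = 1 \<or> k = 2" using assms by (rule lt3)
  moreover have "(\<lambda>x. kth_largest 3 x 0) \<in> borel_measurable (PiM {..<3::nat} (\<lambda>_. Dm a b q))"
    unfolding kth0 by (intro borel_measurable_max c0 c1 c2)
  moreover have "(\<lambda>x. kth_largest 3 x 1) \<in> borel_measurable (PiM {..<3::nat} (\<lambda>_. Dm a b q))"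
    unfolding kth1 by (intro borel_measurable_max borel_measurable_min c0 c1 c2)
  moreover have "(\<lambda>x. kth_largest 3 x 2) \<in> borel_measurable (PiM {..<3::nat} (\<lambda>_. Dm a b q))"
    unfolding kth2 by (intro borel_measurable_min c0 c1 c2)
  ultimately show ?thesis by blast
qed



definition ek :: "real measure \<Rightarrow> nat \<Rightarrow> real" where
  "ek D k = integral\<^sup>L (PiM {..<3::nat} (\<lambda>_. D)) (\<lambda>x. kth_largest 3 x k)"

lemma ek_formula:
  assumes q: "0 \<le> q" "q \<le> 1" and ab: "a \<noteq> b" and k: "k < 3"
  shows "integrable (PiM {..<3::nat} (\<lambda>_. Dm a b q)) (\<lambda>x. kth_largest 3 x k) \<and>
    ek (Dm a b q) k =
    (\<Sum>u\<in>{a,b}. \<Sum>v\<in>{a,b}. \<Sum>w\<in>{a,b}. rev (sort [u,v,w]) ! k *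
       ((if u = a then 1-q else q) * (if v = a then 1-q else q) * (if w = a then 1-q else q)))"
proof -
  have fe: "(\<lambda>x. kth_largest 3 x k) = (\<lambda>x. (\<lambda>u v w. rev (sort [u,v,w]) ! k) (x 0) (x 1) (x 2))"
    by (simp add: kth_eq)
  have m: "(\<lambda>x. (\<lambda>u v w. rev (sort [u,v,w]) ! k) (x 0) (x 1) (x 2)) \<in> borel_measurable (PiM {..<3::nat} (\<lambda>_. Dm a b q))"
    using kth_meas[OF k, of a b q] unfolding fe .
  show ?thesis unfolding ek_def fe by (rule E3[OF q ab m])
qed

lemma expsw:
  assumes q: "0 \<le> q" "q \<le> 1" and ab: "a \<noteq> b" and pos: "\<And>i. i < 2 \<Longrightarrow> rank_pos \<sigma> i j < 3"
  shows "exp_sw (Dm a b q) 2 3 \<sigma> j = ek (Dm a b q) (rank_pos \<sigma> 0 j) + ek (Dm a b q) (rank_pos \<sigma> 1 j)"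
proof -
  define N where "N = PiM {..<3::nat} (\<lambda>_. Dm a b q)"
  have pN: "prob_space N" unfolding N_def by (intro prob_space_PiM prob_Dm)
  have comp: "distr (PiM {..<2::nat} (\<lambda>_. N)) N (\<lambda>\<omega>. \<omega> i) = N" if "i < 2" for i
    using that pN by (intro distr_PiM_component) auto
  have mc: "(\<lambda>\<omega>. \<omega> i) \<in> measurable (PiM {..<2::nat} (\<lambda>_. N)) N" if "i < 2" for i
    using that by (intro measurable_component_singleton) simp
  have fint: "integrable N (\<lambda>x. kth_largest 3 x k)" "(\<lambda>x. kth_largest 3 x k) \<in> borel_measurable N"
    if "k < 3" for k
    using ek_formula[OF q ab that] unfolding N_def by auto
  have each: "integrable (PiM {..<2::nat} (\<lambda>_. N)) (\<lambda>\<omega>. kth_largest 3 (\<omega> i) (rank_pos \<sigma> i j)) \<and>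
     integral\<^sup>L (PiM {..<2::nat} (\<lambda>_. N)) (\<lambda>\<omega>. kth_largest 3 (\<omega> i) (rank_pos \<sigma> i j)) = ek (Dm a b q) (rank_pos \<sigma> i j)"
    if "i < 2" for i
  proof -
    have k: "rank_pos \<sigma> i j < 3" using pos[OF that] .
    have "integrable (distr (PiM {..<2::nat} (\<lambda>_. N)) N (\<lambda>\<omega>. \<omega> i)) (\<lambda>x. kth_largest 3 x (rank_pos \<sigma> i j))"
      unfolding comp[OF that] by (rule fint(1)[OF k])
    then have i1: "integrable (PiM {..<2::nat} (\<lambda>_. N)) (\<lambda>\<omega>. kth_largest 3 (\<omega> i) (rank_pos \<sigma> i j))"
      using integrable_distr_eq[OF mc[OF that] fint(2)[OF k]] by simp
    have "integral\<^sup>L (PiM {..<2::nat} (\<lambda>_. N)) (\<lambda>\<omega>. kth_largest 3 (\<omega> i) (rank_pos \<sigma> i j))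
        = integral\<^sup>L (distr (PiM {..<2::nat} (\<lambda>_. N)) N (\<lambda>\<omega>. \<omega> i)) (\<lambda>x. kth_largest 3 x (rank_pos \<sigma> i j))"
      using integral_distr[OF mc[OF that] fint(2)[OF k]] by simp
    also have "\<dots> = integral\<^sup>L N (\<lambda>x. kth_largest 3 x (rank_pos \<sigma> i j))" by (simp only: comp[OF that])
    also have "\<dots> = ek (Dm a b q) (rank_pos \<sigma> i j)" unfolding N_def ek_def ..
    finally show ?thesis using i1 by simp
  qed
  have "exp_sw (Dm a b q) 2 3 \<sigma> j =
      integral\<^sup>L (PiM {..<2::nat} (\<lambda>_. N)) (\<lambda>\<omega>. \<Sum>i<2. kth_largest 3 (\<omega> i) (rank_pos \<sigma> i j))"
    unfolding exp_sw_def sample_measure_def sw_def utility_def N_def ..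
  also have "\<dots> = (\<Sum>i<2. integral\<^sup>L (PiM {..<2::nat} (\<lambda>_. N)) (\<lambda>\<omega>. kth_largest 3 (\<omega> i) (rank_pos \<sigma> i j)))"
    by (rule Bochner_Integration.integral_sum) (use each in simp)
  also have "\<dots> = (\<Sum>i<2. ek (Dm a b q) (rank_pos \<sigma> i j))"
    by (rule sum.cong) (use each in simp_all)
  also have "\<dots> = ek (Dm a b q) (rank_pos \<sigma> 0 j) + ek (Dm a b q) (rank_pos \<sigma> 1 j)"
    by (simp add: numeral_2_eq_2)
  finally show ?thesis .
qed



definition sig :: "nat \<Rightarrow> nat list" where
  "sig i = (if i = 0 then [0,1,2] else [2,1,0])"

lemma prof: "is_profile 2 3 sig"
  unfolding is_profile_def sig_def by (auto simp: numeral_3_eq_3 lessThan_Suc)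

lemma rank0: assumes "j < 3" shows "rank_pos sig 0 j = j"
  unfolding rank_pos_def
proof (rule the_equality)
  show "j < length (sig 0) \<and> sig 0 ! j = j" using lt3[OF assms] by (auto simp: sig_def)
next
  fix k assume "k < length (sig 0) \<and> sig 0 ! k = j"
  then have "k < 3" "sig 0 ! k = j" by (auto simp: sig_def)
  then show "k = j" using lt3[of k] by (auto simp: sig_def)
qed

lemma rank1: assumes "j < 3" shows "rank_pos sig 1 j = 2 - j"
  unfolding rank_pos_def
proof (rule the_equality)
  show "2 - j < length (sig 1) \<and> sig 1 ! (2 - j) = j" using lt3[OF assms] by (auto simp: sig_def)
next
  fix k assume "k < length (sig 1) \<and> sig 1 ! k = j"
  then have "k < 3" "sig 1 ! k = j" by (auto simp: sig_def)
  then show "k = 2 - j" using lt3[of k] by (auto simp: sig_def)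
qed

lemma D1vals:
  assumes p: "0 \<le> p" "p \<le> 1" and c: "0 < c"
  shows "ek (Dm c 0 p) 0 = c * (1 - p^3)"
    "ek (Dm c 0 p) 1 = c * ((1-p)^3 + 3*(1-p)^2*p)"
    "ek (Dm c 0 p) 2 = c * (1-p)^3"
proof -
  have ne: "c \<noteq> 0" "\<not> c \<le> 0" using c by auto
  show "ek (Dm c 0 p) 0 = c * (1 - p^3)"
    using ek_formula[OF p ne(1), of 0] c by (simp add: ne algebra_simps power3_eq_cube)
  show "ek (Dm c 0 p) 1 = c * ((1-p)^3 + 3*(1-p)^2*p)"
    using ek_formula[OF p ne(1), of 1] c by (simp add: ne algebra_simps power3_eq_cube power2_eq_square)
  show "ek (Dm c 0 p) 2 = c * (1-p)^3"
    using ek_formula[OF p ne(1), of 2] c by (simp add: ne algebra_simps power3_eq_cube)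
qed

lemma D2vals:
  assumes p: "0 \<le> p" "p \<le> 1" and c: "0 < c" "c < 1"
  shows "ek (Dm c 1 p) 0 = c * (1-p)^3 + (1 - (1-p)^3)"
    "ek (Dm c 1 p) 1 = c * ((1-p)^3 + 3*(1-p)^2*p) + (3*p^2*(1-p) + p^3)"
    "ek (Dm c 1 p) 2 = c * (1 - p^3) + p^3"
proof -
  have ne: "c \<noteq> 1" "\<not> 1 \<le> c" "c \<le> 1" using c by auto
  show "ek (Dm c 1 p) 0 = c * (1-p)^3 + (1 - (1-p)^3)"
    using ek_formula[OF p ne(1), of 0] c by (simp add: ne algebra_simps power3_eq_cube)
  show "ek (Dm c 1 p) 1 = c * ((1-p)^3 + 3*(1-p)^2*p) + (3*p^2*(1-p) + p^3)"
    using ek_formula[OF p ne(1), of 1] c by (simp add: ne algebra_simps power3_eq_cube power2_eq_square)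
  show "ek (Dm c 1 p) 2 = c * (1 - p^3) + p^3"
    using ek_formula[OF p ne(1), of 2] c by (simp add: ne algebra_simps power3_eq_cube)
qed



lemma W_eq:
  assumes "0 \<le> q" "q \<le> 1" "a \<noteq> b" "j < 3"
  shows "exp_sw (Dm a b q) 2 3 sig j = ek (Dm a b q) j + ek (Dm a b q) (2 - j)"
proof -
  have "rank_pos sig i j < 3" if "i < 2" for i
  proof -
    have "i = 0 \<or> i = 1" using that by auto
    then show ?thesis using rank0[OF assms(4)] rank1[OF assms(4)] assms(4) by auto
  qed
  then show ?thesis using expsw[OF assms(1-3)] rank0[OF assms(4)] rank1[OF assms(4)] by simp
qed

lemma ineq1:
  fixes p c :: real
  assumes "0 < p" "p < 1/2" "0 < c"
  shows "c * (1 - p^3) + c * (1-p)^3 < 2 * (c * ((1-p)^3 + 3*(1-p)^2*p))"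
proof -
  have "2 * (c * ((1-p)^3 + 3*(1-p)^2*p)) - (c * (1 - p^3) + c * (1-p)^3) = c * (3*p*((1-p)*(1-2*p)))"
    by (simp add: algebra_simps power3_eq_cube power2_eq_square)
  moreover have "0 < c * (3*p*((1-p)*(1-2*p)))" using assms by (intro mult_pos_pos) auto
  ultimately show ?thesis by linarith
qed

lemma ineq2:
  fixes p \<delta> :: real
  assumes p: "0 < p" "p \<le> 1/10" and d: "10 * p \<le> \<delta>"
  shows "2 * (p^2 * ((1-p)^3 + 3*(1-p)^2*p) + (3*p^2*(1-p) + p^3))
       < \<delta> * ((p^2 * (1-p)^3 + (1 - (1-p)^3)) + (p^2 * (1 - p^3) + p^3))"
proof -
  define A where "A = (1-p)^3 + 3*(1-p)^2*p"
  have A1: "A = 1 - 3*p^2*(1-p) - p^3" unfolding A_def by (simp add: algebra_simps power3_eq_cube power2_eq_square)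
  have "0 \<le> 3*p^2*(1-p)" using p by auto
  moreover have "0 \<le> p^3" using p by auto
  ultimately have "A \<le> 1" using A1 by linarith
  then have L1: "p^2 * A \<le> p^2" using p by (simp add: mult_left_le)
  have "3*p^2*(1-p) \<le> 3*p^2" using p by (simp add: mult_left_le)
  moreover have "p^3 \<le> p^2" using p by (simp add: power3_eq_cube power2_eq_square mult_left_le)
  moreover have "2 * (Z + (X + Y)) \<le> 10 * P" if "X \<le> 3 * P" "Y \<le> P" "Z \<le> P" for X Y Z P :: real
    using that by (smt (verit))
  ultimately have L: "2 * (p^2 * A + (3*p^2*(1-p) + p^3)) \<le> 10 * p^2" using L1 by blast
  have R1: "1 - (1-p)^3 = p * (3 - 3*p + p^2)" by (simp add: algebra_simps power3_eq_cube power2_eq_square)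
  have "0 \<le> p^2" by simp
  then have "3 - 3*p + p^2 \<ge> 2" using p by linarith
  then have "p * 2 \<le> p * (3 - 3*p + p^2)" using p by (intro mult_left_mono) auto
  then have R2: "1 - (1-p)^3 \<ge> 2 * p" using R1 by (simp add: mult.commute)
  have nn: "0 \<le> p^2 * (1-p)^3" "0 \<le> p^2 * (1 - p^3) + p^3"
    using p by (auto simp: power_le_one)
  have "2 * p \<le> (p^2 * (1-p)^3 + (1 - (1-p)^3)) + (p^2 * (1 - p^3) + p^3)"
    using R2 nn by linarith
  then have "\<delta> * (2 * p) \<le> \<delta> * ((p^2 * (1-p)^3 + (1 - (1-p)^3)) + (p^2 * (1 - p^3) + p^3))"
    using d p by (intro mult_left_mono) auto
  moreover have "10 * p * (2 * p) \<le> \<delta> * (2 * p)" using d p by (intro mult_right_mono) auto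
  moreover have "10 * p^2 < 10 * p * (2 * p)" using p by (simp add: power2_eq_square)
  ultimately show ?thesis using L unfolding A_def by linarith
qed



lemma distr_Dm: assumes "0 \<le> q" "q \<le> 1" "0 \<le> a" "a \<le> 1" "0 \<le> b" "b \<le> 1"
  shows "distr_on01 (Dm a b q)"
  unfolding distr_on01_def using assms by (simp add: prob_Dm measure_Dm)

lemma tv_Dm: assumes "0 \<le> q" "q \<le> 1"
  shows "tv_dist (Dm c 0 q) (Dm c 1 q) \<le> q"
  unfolding tv_dist_def
proof (rule cSUP_least)
  show "sets borel \<noteq> {}" by auto
next
  fix A :: "real set" assume A: "A \<in> sets borel"
  show "\<bar>measure (Dm c 0 q) A - measure (Dm c 1 q) A\<bar> \<le> q"
    using assms by (simp add: measure_Dm[OF assms A])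
qed

theorem theorem11:
  fixes \<delta> \<epsilon> :: real
  assumes "0 < \<delta>" "\<delta> \<le> 1" "0 < \<epsilon>" "\<epsilon> \<le> 1"
  shows "\<exists>(n::nat) (m::nat) \<sigma> D1 D2.
           0 < n \<and> 0 < m \<and> is_profile n m \<sigma> \<and>
           distr_on01 D1 \<and> distr_on01 D2 \<and> tv_dist D1 D2 \<le> \<epsilon> \<and>
           (\<forall>j<m. (\<forall>k<m. exp_sw D1 n m \<sigma> k \<le> exp_sw D1 n m \<sigma> j) \<longrightarrow>
                   exp_sw D2 n m \<sigma> j < \<delta> * Max ((\<lambda>k. exp_sw D2 n m \<sigma> k) ` {..<m}))"
proof -
  define p where "p = min \<epsilon> \<delta> / 10"
  define c where "c = p^2"
  have p0: "0 < p" unfolding p_def using assms by simp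
  have p1: "p \<le> 1/10" unfolding p_def using assms by (simp add: min_def)
  have pe: "p \<le> \<epsilon>" unfolding p_def using assms by (simp add: min_def)
  have pd: "10 * p \<le> \<delta>" unfolding p_def using assms by (simp add: min_def)
  have c0: "0 < c" unfolding c_def using p0 by simp
  have "p * p \<le> 1 * p" using p0 p1 by (intro mult_right_mono) auto
  then have c1: "c < 1" unfolding c_def power2_eq_square using p1 by linarith
  have pq: "0 \<le> p" "p \<le> 1" using p0 p1 by auto
  define D1 where "D1 = Dm c 0 p"
  define D2 where "D2 = Dm c 1 p"
  have W1: "exp_sw D1 2 3 sig j = ek D1 j + ek D1 (2 - j)" if "j < 3" for j
    unfolding D1_def using W_eq[OF pq _ that, of c 0] c0 by simp
  have W2: "exp_sw D2 2 3 sig j = ek D2 j + ek D2 (2 - j)" if "j < 3" for j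
    unfolding D2_def using W_eq[OF pq _ that, of c 1] c1 by simp
  note v1 = D1vals[OF pq c0, folded D1_def]
  note v2 = D2vals[OF pq c0 c1, folded D2_def]
  have p2: "p < 1/2" using p1 by simp
  have e10: "exp_sw D1 2 3 sig 0 = c * (1 - p^3) + c * (1-p)^3"
    using W1[of 0] v1(1) v1(3) by simp
  have e12: "exp_sw D1 2 3 sig 2 = c * (1-p)^3 + c * (1 - p^3)"
    using W1[of 2] v1(1) v1(3) by simp
  have e11: "exp_sw D1 2 3 sig 1 = 2 * (c * ((1-p)^3 + 3*(1-p)^2*p))"
    using W1[of 1] v1(2) by simp
  have w1_0: "exp_sw D1 2 3 sig 0 < exp_sw D1 2 3 sig 1"
    unfolding e10 e11 by (rule ineq1[OF p0 p2 c0])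
  have w1_2: "exp_sw D1 2 3 sig 2 < exp_sw D1 2 3 sig 1"
    unfolding e12 e11 using ineq1[OF p0 p2 c0] by linarith
  have e20: "exp_sw D2 2 3 sig 0 = (c * (1-p)^3 + (1 - (1-p)^3)) + (c * (1 - p^3) + p^3)"
    using W2[of 0] v2(1) v2(3) by simp
  have e21: "exp_sw D2 2 3 sig 1 = 2 * (c * ((1-p)^3 + 3*(1-p)^2*p) + (3*p^2*(1-p) + p^3))"
    using W2[of 1] v2(2) by simp
  have w2: "exp_sw D2 2 3 sig 1 < \<delta> * exp_sw D2 2 3 sig 0"
    unfolding e20 e21 c_def by (rule ineq2[OF p0 p1 pd])
  have mx: "exp_sw D2 2 3 sig 0 \<le> Max ((\<lambda>k. exp_sw D2 2 3 sig k) ` {..<3})"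
    by (rule Max_ge) auto
  have "0 < (2::nat) \<and> 0 < (3::nat) \<and> is_profile 2 3 sig \<and>
           distr_on01 D1 \<and> distr_on01 D2 \<and> tv_dist D1 D2 \<le> \<epsilon> \<and>
           (\<forall>j<3. (\<forall>k<3. exp_sw D1 2 3 sig k \<le> exp_sw D1 2 3 sig j) \<longrightarrow>
                   exp_sw D2 2 3 sig j < \<delta> * Max ((\<lambda>k. exp_sw D2 2 3 sig k) ` {..<3}))"
  proof (intro conjI allI impI)
    show "is_profile 2 3 sig" by (rule prof)
    show "distr_on01 D1" unfolding D1_def using pq c0 c1 by (intro distr_Dm) auto
    show "distr_on01 D2" unfolding D2_def using pq c0 c1 by (intro distr_Dm) auto
    show "tv_dist D1 D2 \<le> \<epsilon>" unfolding D1_def D2_def using tv_Dm[OF pq, of c] pe by linarith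
  next
    fix j :: nat assume j: "j < 3" and mxj: "\<forall>k<3. exp_sw D1 2 3 sig k \<le> exp_sw D1 2 3 sig j"
    have "j = 0 \<or> j = 1 \<or> j = 2" using lt3[OF j] .
    have le1: "exp_sw D1 2 3 sig 1 \<le> exp_sw D1 2 3 sig j" using mxj by simp
    moreover have "j \<noteq> 0"
    proof
      assume "j = 0" then show False using le1 w1_0 by simp
    qed
    moreover have "j \<noteq> 2"
    proof
      assume "j = 2" then show False using le1 w1_2 by simp
    qed
    ultimately have "j = 1" using lt3[OF j] by blast
    moreover have "\<delta> * exp_sw D2 2 3 sig 0 \<le> \<delta> * Max ((\<lambda>k. exp_sw D2 2 3 sig k) ` {..<3})"
      using mx assms(1) by (intro mult_left_mono) auto
    ultimately show "exp_sw D2 2 3 sig j < \<delta> * Max ((\<lambda>k. exp_sw D2 2 3 sig k) ` {..<3})"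
      using w2 by simp
  qed auto
  then show ?thesis by blast
qed

end
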